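(* Under the standing setup, assume $\dim G_{\lambda_1}<d-1$. Let $(v^k)$, $(x^k)$ be generated by Algorithm U and let $\alpha_k=b_kd_k-a_ke_k$, where $a_k=\|Av^k\|^2$, $b_k=\langle Av^k,Ax^k\rangle$, $d_k=\|Bv^k\|^2$, $e_k=\langle Bv^k,Bx^k\rangle$. Then $\alpha_k\to0$ as $k\to\infty$ almost surely.
   Context: Standing setup. Let $d\ge 2$, $A\in\mathbb R^{m\times d}$, $B\in\mathbb R^{\ell\times d}$ with $\ker B=\{0\}$, so $B^TB$ is symmetric positive definite. $\mathbb S^{d-1}$ is the Euclidean unit sphere of $\mathbb R^d$ and $\mathcal U(\mathbb S^{d-1})$ the uniform (normalized surface) probability measure on it. Define $f(v)=\|Av\|^2/\|Bv\|^2$ for $v\neq0$. A generalized eigenvector of $(A^TA,B^TB)$ is a vector $v\neq 0$ with $A^TAv=\lambda B^TBv$ for some $\lambda\in\mathbb R$ (a generalized eigenvalue); the generalized eigenvalues are exactly the eigenvalues of the symmetric matrix $K=(B^TB)^{-1/2}A^TA(B^TB)^{-1/2}$, listed with multiplicity as $\lambda_1\ge\lambda_2\ge\dots\ge\lambda_d$. For a generalized eigenvalue $\lambda$ let $G_\lambda=\{v\in\mathbb R^d\setminus\{0\}: A^TAv=\lambda B^TBv\}$, and $\dim G_\lambda$ denotes the dimension of the linear subspace $G_\lambda\cup\{0\}$. Algorithm U. Let $g\sim\mathcal N(0,I_d)$ and $v^0=g/\|g\|$; let $x^0,x^1,x^2,\dots$ be i.i.d. with law $\mathcal U(\mathbb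 S^{d-1})$, independent of $g$. Given $v^k\in\mathbb S^{d-1}$, set $s_k(\tau)=f(v^k+\tau x^k)$ for $\tau\in\mathbb R$ with $v^k+\tau x^k\neq0$; let $\tau_k$ be a (measurably chosen) maximizer of $s_k$ over $\tau\in\mathbb R$, with $\tau_k=0$ if no maximizer exists, and set $v^{k+1}=(v^k+\tau_kx^k)/\|v^k+\tau_kx^k\|$. *)

theory Defs
  imports "HOL-Probability.Probability"
begin

definition rayq :: "real^'n^'m \<Rightarrow> real^'n^'l \<Rightarrow> real^'n \<Rightarrow> real" where
  "rayq A B v = (norm (A *v v))\<^sup>2 / (norm (B *v v))\<^sup>2"

definition gen_eigenspace :: "real^'n^'m \<Rightarrow> real^'n^'l \<Rightarrow> real \<Rightarrow> (real^'n) set" where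
  "gen_eigenspace A B lam =
     {v. (transpose A ** A) *v v = lam *\<^sub>R ((transpose B ** B) *v v)}"

definition gen_eigenvalue :: "real^'n^'m \<Rightarrow> real^'n^'l \<Rightarrow> real \<Rightarrow> bool" where
  "gen_eigenvalue A B lam \<longleftrightarrow>
     (\<exists>v. v \<noteq> 0 \<and> (transpose A ** A) *v v = lam *\<^sub>R ((transpose B ** B) *v v))"

definition lambda_max :: "real^'n^'m \<Rightarrow> real^'n^'l \<Rightarrow> real" where
  "lambda_max A B = Max {lam. gen_eigenvalue A B lam}"

text \<open>Uniform (normalized surface) probability measure on the unit sphere,
  realised as the cone measure: radial projection of the uniform
  distribution on the punctured unit ball.\<close>
definition unif_sphere :: "(real^'n) measure" where
  "unif_sphere = distr (uniform_measure lborel (ball 0 1 - {0})) borel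
                       (\<lambda>x. x /\<^sub>R norm x)"

definition is_line_max :: "real^'n^'m \<Rightarrow> real^'n^'l \<Rightarrow> real^'n \<Rightarrow> real^'n \<Rightarrow> real \<Rightarrow> bool" where
  "is_line_max A B v x t \<longleftrightarrow> v + t *\<^sub>R x \<noteq> 0 \<and>
     (\<forall>s. v + s *\<^sub>R x \<noteq> 0 \<longrightarrow> rayq A B (v + s *\<^sub>R x) \<le> rayq A B (v + t *\<^sub>R x))"

end

theory Submission
  imports Defs "HOL-Computational_Algebra.Polynomial"
begin

definition ga :: "real^'n^'m \<Rightarrow> real^'n^'l \<Rightarrow> real^'n \<Rightarrow> real^'n \<Rightarrow> real" where
  "ga A B w x = (norm (A *v x))\<^sup>2 * inner (B *v w) (B *v x) - inner (A *v w) (A *v x) * (norm (B *v x))\<^sup>2"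

lemma inner_tr: "inner (transpose A *v u) x = inner u (A *v (x::real^'n))"
  for A :: "real^'n^'m"
  by (simp add: inner_vec_def matrix_vector_mult_def transpose_def sum_distrib_left sum_distrib_right mult_ac)
     (rule sum.swap)

lemma inner_AtA: "inner ((transpose A ** A) *v y) x = inner (A *v y) (A *v (x::real^'n))"
  for A :: "real^'n^'m"
  by (metis matrix_vector_mul_assoc inner_tr)

lemma Bpos: assumes kerB: "\<forall>u. B *v u = 0 \<longrightarrow> u = 0" and "u \<noteq> 0"
  shows "norm (B *v u) > 0"
  using assms by auto

lemma ga_zero_imp_prop:
  fixes A :: "real^'n^'m" and B :: "real^'n^'l"
  assumes kerB: "\<forall>u. B *v u = 0 \<longrightarrow> u = 0" and w: "w \<noteq> 0"
    and z: "\<forall>x. ga A B w x = 0"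
  shows "\<exists>\<mu>. \<forall>x. (norm (A *v x))\<^sup>2 = \<mu> * (norm (B *v x))\<^sup>2"
proof -
  define u where "u = (transpose B ** B) *v w"
  define p where "p = (transpose A ** A) *v w"
  have uI: "inner u x = inner (B *v w) (B *v x)" for x unfolding u_def by (rule inner_AtA)
  have pI: "inner p x = inner (A *v w) (A *v x)" for x unfolding p_def by (rule inner_AtA)
  have "inner u w = (norm (B *v w))\<^sup>2" using uI by (simp add: power2_norm_eq_inner)
  moreover have "norm (B *v w) > 0" using kerB w by auto
  ultimately have u0: "u \<noteq> 0" by auto
  have gaE: "ga A B w x = (norm (A *v x))\<^sup>2 * inner u x - inner p x * (norm (B *v x))\<^sup>2" for x
    unfolding ga_def uI pI ..
  define \<mu> where "\<mu> = inner p u / (norm u)\<^sup>2"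
  define r where "r = p - \<mu> *\<^sub>R u"
  have ru: "inner r u = 0" using u0 unfolding r_def \<mu>_def
    by (simp add: inner_diff_left power2_norm_eq_inner)
  have "inner p r = (norm r)\<^sup>2"
  proof -
    have "p = r + \<mu> *\<^sub>R u" unfolding r_def by simp
    then have "inner p r = inner r r + \<mu> * inner u r" by (metis inner_add_left inner_scaleR_left)
    then show ?thesis using ru by (simp add: power2_norm_eq_inner inner_commute)
  qed
  moreover have "ga A B w r = - inner p r * (norm (B *v r))\<^sup>2"
    using gaE[of r] ru by (simp add: inner_commute)
  ultimately have "(norm r)\<^sup>2 * (norm (B *v r))\<^sup>2 = 0" using z by simp
  then have "r = 0" using kerB by auto
  then have pu: "p = \<mu> *\<^sub>R u" unfolding r_def by simp
  define Q where "Q x = (norm (A *v x))\<^sup>2 - \<mu> * (norm (B *v x))\<^sup>2" for x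
  have Qz: "inner u x \<noteq> 0 \<Longrightarrow> Q x = 0" for x
    using z gaE[of x] pu unfolding Q_def by (auto simp: algebra_simps)
  have Qpar: "Q (x + y) + Q (x - y) = 2 * Q x + 2 * Q y" for x y
    unfolding Q_def
    by (simp add: matrix_vector_right_distrib matrix_vector_mult_diff_distrib power2_norm_eq_inner
        inner_add_left inner_add_right inner_diff_left inner_diff_right algebra_simps)
  have "Q x = 0" for x
  proof (cases "inner u x = 0")
    case True
    have uu: "inner u u \<noteq> 0" using u0 by simp
    have "Q (x + u) = 0" using True uu by (intro Qz) (simp add: inner_add_right)
    moreover have "Q (x - u) = 0" using True uu by (intro Qz) (simp add: inner_diff_right)
    moreover have "Q u = 0" using uu by (intro Qz)
    ultimately show ?thesis using Qpar[of x u] by simp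
  qed (rule Qz)
  then show ?thesis unfolding Q_def by auto
qed

lemma prop_imp_matrix:
  fixes A :: "real^'n^'m" and B :: "real^'n^'l"
  assumes "\<forall>x. (norm (A *v x))\<^sup>2 = \<mu> * (norm (B *v x))\<^sup>2"
  shows "(transpose A ** A) *v y = \<mu> *\<^sub>R ((transpose B ** B) *v y)"
proof -
  define zz where "zz = (transpose A ** A) *v y - \<mu> *\<^sub>R ((transpose B ** B) *v y)"
  have pol: "inner (A *v y) (A *v x) = ((norm (A *v (x+y)))\<^sup>2 - (norm (A *v x))\<^sup>2 - (norm (A *v y))\<^sup>2)/2"
    for A :: "real^'n^'k" and x
    by (simp add: matrix_vector_right_distrib power2_norm_eq_inner inner_add_left inner_add_right inner_commute)
  have "inner zz x = 0" for x
    unfolding zz_def inner_diff_left inner_scaleR_left inner_AtA pol[of A] pol[of B]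
    by (simp only: assms[rule_format]) (simp add: algebra_simps diff_divide_distrib)
  then have "zz = 0" by (metis inner_eq_zero_iff)
  then show ?thesis unfolding zz_def by simp
qed

lemma matrix_contra:
  fixes A :: "real^'n^'m" and B :: "real^'n^'l"
  assumes kerB: "\<forall>u. B *v u = 0 \<longrightarrow> u = 0"
    and dimG: "dim (gen_eigenspace A B (lambda_max A B)) < CARD('n) - 1"
    and M: "\<And>y. (transpose A ** A) *v y = \<mu> *\<^sub>R ((transpose B ** B) *v y)"
  shows False
proof -
  have BtB: "(transpose B ** B) *v y \<noteq> 0" if "y \<noteq> 0" for y
  proof
    assume "(transpose B ** B) *v y = 0"
    then have "inner ((transpose B ** B) *v y) y = 0" by simp
    then have "norm (B *v y) = 0" by (simp add: inner_AtA power2_norm_eq_inner[symmetric])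
    then show False using kerB that by auto
  qed
  have "{lam. gen_eigenvalue A B lam} = {\<mu>}"
  proof safe
    fix lam assume "gen_eigenvalue A B lam"
    then obtain y where y: "y \<noteq> 0" "(transpose A ** A) *v y = lam *\<^sub>R ((transpose B ** B) *v y)"
      unfolding gen_eigenvalue_def by auto
    then have "lam *\<^sub>R ((transpose B ** B) *v y) = \<mu> *\<^sub>R ((transpose B ** B) *v y)" by (metis y(2) M)
    then show "lam = \<mu>" using BtB[OF y(1)] by simp
  next
    have "(axis undefined 1 :: real^'n) \<noteq> 0" by (simp add: axis_eq_0_iff)
    then show "gen_eigenvalue A B \<mu>" unfolding gen_eigenvalue_def using M by blast
  qed
  then have "lambda_max A B = \<mu>" unfolding lambda_max_def by simp
  then have "gen_eigenspace A B (lambda_max A B) = UNIV" unfolding gen_eigenspace_def using M by auto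
  then have "dim (gen_eigenspace A B (lambda_max A B)) = CARD('n)"
    by (simp add: DIM_cart)
  then show False using dimG by simp
qed

lemma ga_nonzero:
  fixes A :: "real^'n^'m" and B :: "real^'n^'l"
  assumes kerB: "\<forall>u. B *v u = 0 \<longrightarrow> u = 0"
    and dimG: "dim (gen_eigenspace A B (lambda_max A B)) < CARD('n) - 1"
    and w: "w \<noteq> 0"
  shows "\<exists>z. ga A B w z \<noteq> 0"
proof (rule ccontr)
  assume "\<not> ?thesis"
  then obtain \<mu> where "\<forall>x. (norm (A *v x))\<^sup>2 = \<mu> * (norm (B *v x))\<^sup>2"
    using ga_zero_imp_prop[OF kerB w, where A=A] by blast
  then show False using matrix_contra[OF kerB dimG prop_imp_matrix] by blast
qed

definition Mx :: "real \<Rightarrow> real \<Rightarrow> real \<Rightarrow> real \<Rightarrow> real \<Rightarrow> real \<Rightarrow> real" where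
  "Mx a b c d e h = ((a*h + c*d - 2*b*e) + sqrt ((a*h + c*d - 2*b*e)\<^sup>2 - 4*(d*h - e\<^sup>2)*(a*c - b\<^sup>2))) / (2*(d*h - e\<^sup>2))"

definition tx :: "real \<Rightarrow> real \<Rightarrow> real \<Rightarrow> real \<Rightarrow> real \<Rightarrow> real \<Rightarrow> real" where
  "tx a b c d e h = (Mx a b c d e h * e - b) / (c - Mx a b c d e h * h)"

lemma quad_core:
  fixes a b c d e h :: real
  assumes Dpos: "\<And>\<tau>. d + 2*e*\<tau> + h*\<tau>\<^sup>2 > 0" and h: "h > 0" and g: "c*e - b*h \<noteq> 0"
  shows "c - Mx a b c d e h * h < 0"
    and "\<And>\<tau>. (a + 2*b*\<tau> + c*\<tau>\<^sup>2) - Mx a b c d e h * (d + 2*e*\<tau> + h*\<tau>\<^sup>2)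
              = (c - Mx a b c d e h * h) * (\<tau> - tx a b c d e h)\<^sup>2"
proof -
  define K where "K = d*h - e\<^sup>2"
  define P where "P = a*h + c*d - 2*b*e"
  define R where "R = a*c - b\<^sup>2"
  define disc where "disc = P\<^sup>2 - 4*K*R"
  define M where "M = Mx a b c d e h"
  define L where "L = c / h"
  have M_def': "M = (P + sqrt disc) / (2*K)" unfolding M_def Mx_def K_def P_def R_def disc_def ..
  have "d + 2*e*(-e/h) + h*(-e/h)\<^sup>2 > 0" by (rule Dpos)
  then have "d - e\<^sup>2/h > 0" using h by (simp add: power2_eq_square field_simps)
  then have K: "K > 0" using h unfolding K_def by (simp add: field_simps)
  have chiL: "K*L\<^sup>2 - P*L + R = -(c*e-b*h)\<^sup>2/h\<^sup>2"
    unfolding K_def P_def R_def L_def using h by (simp add: field_simps power2_eq_square)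
  have chiLneg: "K*L\<^sup>2 - P*L + R < 0" unfolding chiL using g h by simp
  have sq: "4*K*(K*y\<^sup>2 - P*y + R) = (2*K*y - P)\<^sup>2 - disc" for y
    unfolding disc_def by (simp add: power2_eq_square algebra_simps)
  have disc: "disc > 0"
  proof (rule ccontr)
    assume "\<not> disc > 0"
    moreover have "(2*K*L - P)\<^sup>2 \<ge> 0" by simp
    ultimately have "4*K*(K*L\<^sup>2 - P*L + R) \<ge> 0" unfolding sq by linarith
    then show False using chiLneg K by (simp add: mult_le_0_iff zero_le_mult_iff)
  qed
  have "(2*K*L - P)\<^sup>2 < disc" using sq[of L] chiLneg K by (smt (verit) mult_pos_neg)
  then have "\<bar>2*K*L - P\<bar> < sqrt disc" using real_less_rsqrt by (metis real_sqrt_abs real_sqrt_less_mono)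
  then have "2*K*L - P < 2*K*M - P" unfolding M_def' using K by simp
  then have hML: "M > L" using K by simp
  have "4*K*(K*M\<^sup>2 - P*M + R) = 0" unfolding sq unfolding M_def' using K disc by simp
  then have chiM: "K*M\<^sup>2 - P*M + R = 0" using K by simp
  have q2: "c - M*h < 0" using hML h unfolding L_def by (simp add: field_simps)
  then show "c - Mx a b c d e h * h < 0" unfolding M_def .
  have q12: "(b - M*e)\<^sup>2 = (a - M*d)*(c - M*h)"
    using chiM unfolding K_def P_def R_def by (simp add: power2_eq_square algebra_simps)
  have gen: "q0 + 2*q1*\<tau> + q2*\<tau>\<^sup>2 = q2*(\<tau> - (-q1/q2))\<^sup>2"
    if "q2 \<noteq> 0" "q1\<^sup>2 = q0*q2" for q0 q1 q2 \<tau> :: real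
  proof -
    have "q2*(\<tau> - (-q1/q2))\<^sup>2 = q2*\<tau>\<^sup>2 + 2*q1*\<tau> + q1\<^sup>2/q2"
      using that(1) by (simp add: power2_eq_square field_simps)
    also have "q1\<^sup>2/q2 = q0" using that by (simp add: field_simps)
    finally show ?thesis by simp
  qed
  fix \<tau>
  have t: "tx a b c d e h = -(b - M*e)/(c - M*h)" unfolding tx_def M_def by (simp add: field_simps)
  have "(a + 2*b*\<tau> + c*\<tau>\<^sup>2) - M * (d + 2*e*\<tau> + h*\<tau>\<^sup>2)
      = (a - M*d) + 2*(b - M*e)*\<tau> + (c - M*h)*\<tau>\<^sup>2" by (simp add: algebra_simps)
  also have "\<dots> = (c - M*h) * (\<tau> - tx a b c d e h)\<^sup>2"
    unfolding t using q2 q12 by (intro gen) auto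
  finally show "(a + 2*b*\<tau> + c*\<tau>\<^sup>2) - Mx a b c d e h * (d + 2*e*\<tau> + h*\<tau>\<^sup>2)
              = (c - Mx a b c d e h * h) * (\<tau> - tx a b c d e h)\<^sup>2" unfolding M_def .
qed

definition tsel :: "real^'n^'m \<Rightarrow> real^'n^'l \<Rightarrow> real^'n \<Rightarrow> real^'n \<Rightarrow> real" where
  "tsel A B v x = tx ((norm (A *v v))\<^sup>2) (inner (A *v v) (A *v x)) ((norm (A *v x))\<^sup>2)
                     ((norm (B *v v))\<^sup>2) (inner (B *v v) (B *v x)) ((norm (B *v x))\<^sup>2)"

lemma normexp: "(norm (A *v (v + t *\<^sub>R x)))\<^sup>2 =
   (norm (A *v v))\<^sup>2 + 2 * inner (A *v v) (A *v x) * t + (norm (A *v x))\<^sup>2 * t\<^sup>2"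
  for A :: "real^'n^'m"
proof -
  have "A *v (v + t *\<^sub>R x) = A *v v + t *\<^sub>R (A *v x)"
    by (simp add: matrix_vector_right_distrib matrix_vector_mult_scaleR)
  moreover have "inner (p + t *\<^sub>R q) (p + t *\<^sub>R q) = inner p p + 2 * inner p q * t + inner q q * t\<^sup>2" for p q :: "real^'m"
    by (simp add: inner_add_left inner_add_right inner_commute power2_eq_square algebra_simps)
  ultimately show ?thesis by (simp add: power2_norm_eq_inner)
qed

lemma ga_par: "ga A B (s *\<^sub>R x) x = 0"
  unfolding ga_def by (simp add: matrix_vector_mult_scaleR power2_norm_eq_inner)

lemma ga_nz_lin:
  assumes "ga A B v x \<noteq> 0" shows "v + t *\<^sub>R x \<noteq> 0" and "x \<noteq> 0"
proof -
  show "v + t *\<^sub>R x \<noteq> 0"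
  proof
    assume "v + t *\<^sub>R x = 0"
    then have "v = (-t) *\<^sub>R x" by (simp add: eq_neg_iff_add_eq_0)
    then show False using assms ga_par by metis
  qed
  show "x \<noteq> 0" using assms unfolding ga_def by auto
qed

lemma Det1:
  fixes A :: "real^'n^'m" and B :: "real^'n^'l"
  assumes kerB: "\<forall>u. B *v u = 0 \<longrightarrow> u = 0" and g: "ga A B v x \<noteq> 0"
  shows "is_line_max A B v x (tsel A B v x)"
    and "is_line_max A B v x t \<Longrightarrow> t = tsel A B v x"
proof -
  define a where "a = (norm (A *v v))\<^sup>2"
  define b where "b = inner (A *v v) (A *v x)"
  define c where "c = (norm (A *v x))\<^sup>2"
  define d where "d = (norm (B *v v))\<^sup>2"
  define e where "e = inner (B *v v) (B *v x)"
  define h where "h = (norm (B *v x))\<^sup>2"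
  define M where "M = Mx a b c d e h"
  define t0 where "t0 = tsel A B v x"
  have t0: "t0 = tx a b c d e h" unfolding t0_def tsel_def a_def b_def c_def d_def e_def h_def ..
  have N: "(norm (A *v (v + \<tau> *\<^sub>R x)))\<^sup>2 = a + 2*b*\<tau> + c*\<tau>\<^sup>2" for \<tau>
    unfolding normexp a_def b_def c_def by simp
  have D: "(norm (B *v (v + \<tau> *\<^sub>R x)))\<^sup>2 = d + 2*e*\<tau> + h*\<tau>\<^sup>2" for \<tau>
    unfolding normexp d_def e_def h_def by simp
  have nz: "v + \<tau> *\<^sub>R x \<noteq> 0" for \<tau> using ga_nz_lin[OF g] by auto
  have Dpos: "d + 2*e*\<tau> + h*\<tau>\<^sup>2 > 0" for \<tau>
    unfolding D[symmetric] using kerB nz[of \<tau>] by auto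
  have hpos: "h > 0" unfolding h_def using kerB ga_nz_lin(2)[OF g] by auto
  have gg: "c*e - b*h \<noteq> 0" using g unfolding ga_def a_def b_def c_def e_def h_def by simp
  note qc = quad_core[OF Dpos hpos gg, of a, folded M_def t0]
  have rq: "rayq A B (v + \<tau> *\<^sub>R x) = (a + 2*b*\<tau> + c*\<tau>\<^sup>2) / (d + 2*e*\<tau> + h*\<tau>\<^sup>2)" for \<tau>
    unfolding rayq_def N D ..
  have le: "rayq A B (v + \<tau> *\<^sub>R x) \<le> M" for \<tau>
  proof -
    have "(a + 2*b*\<tau> + c*\<tau>\<^sup>2) - M * (d + 2*e*\<tau> + h*\<tau>\<^sup>2) \<le> 0"
      unfolding qc(2) using qc(1) by (simp add: mult_nonpos_nonneg)
    then show ?thesis unfolding rq using Dpos[of \<tau>] by (simp add: divide_le_eq)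
  qed
  have eqM: "rayq A B (v + t0 *\<^sub>R x) = M"
  proof -
    have "(a + 2*b*t0 + c*t0\<^sup>2) - M * (d + 2*e*t0 + h*t0\<^sup>2) = 0"
      unfolding qc(2) by simp
    then show ?thesis unfolding rq using Dpos[of t0] by (simp add: field_simps)
  qed
  show "is_line_max A B v x (tsel A B v x)"
    unfolding is_line_max_def t0_def[symmetric] using nz le eqM by auto
  assume "is_line_max A B v x t"
  then have "rayq A B (v + t0 *\<^sub>R x) \<le> rayq A B (v + t *\<^sub>R x)"
    unfolding is_line_max_def using nz by auto
  then have "rayq A B (v + t *\<^sub>R x) = M" using le[of t] eqM by simp
  then have "(a + 2*b*t + c*t\<^sup>2) - M * (d + 2*e*t + h*t\<^sup>2) = 0"
    unfolding rq using Dpos[of t] by (simp add: field_simps)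
  then have "(c - M*h) * (t - t0)\<^sup>2 = 0" unfolding qc(2) .
  then show "t = tsel A B v x" using qc(1) unfolding t0_def by simp
qed

lemma real_incr:
  fixes a b c d e h CA CB :: real
  assumes d: "0 < d" "d \<le> CB" and a: "0 \<le> a" "a \<le> CA" and c: "0 \<le> c" "c \<le> CA"
    and b: "\<bar>b\<bar> \<le> CA" and e: "\<bar>e\<bar> \<le> CB" and h: "0 \<le> h" "h \<le> CB"
    and CA: "CA > 0" and CB: "CB > 0"
    and Dp: "d + 2*e*(\<eta>*(b*d - a*e)) + h*(\<eta>*(b*d - a*e))\<^sup>2 > 0"
    and eta: "\<eta> = 1/(2*CA*CB + 1)"
  shows "(a + 2*b*(\<eta>*(b*d - a*e)) + c*(\<eta>*(b*d - a*e))\<^sup>2) / (d + 2*e*(\<eta>*(b*d - a*e)) + h*(\<eta>*(b*d - a*e))\<^sup>2)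
         \<ge> a/d + \<eta> / (CB*CB*(1 + \<eta>*(2*CA*CB))\<^sup>2) * (b*d - a*e)\<^sup>2"
proof -
  define al where "al = b*d - a*e"
  define be where "be = c*d - a*h"
  define \<tau> where "\<tau> = \<eta> * al"
  define N where "N = a + 2*b*\<tau> + c*\<tau>\<^sup>2"
  define D where "D = d + 2*e*\<tau> + h*\<tau>\<^sup>2"
  have eta0: "\<eta> > 0" using eta CA CB by (simp add: add_pos_pos)
  have Dp': "D > 0" using Dp unfolding D_def \<tau>_def al_def .
  have "\<bar>b*d\<bar> \<le> CA*CB" using b d by (simp add: abs_mult mult_mono)
  moreover have "\<bar>a*e\<bar> \<le> CA*CB" using a e by (simp add: abs_mult mult_mono)
  ultimately have alb: "\<bar>al\<bar> \<le> 2*CA*CB" unfolding al_def by linarith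
  have "\<bar>c*d\<bar> \<le> CA*CB" using c d by (simp add: abs_mult mult_mono)
  moreover have "\<bar>a*h\<bar> \<le> CA*CB" using a h by (simp add: abs_mult mult_mono)
  ultimately have beb: "\<bar>be\<bar> \<le> 2*CA*CB" unfolding be_def by linarith
  have num: "N*d - a*D = al\<^sup>2 * (2*\<eta> + be*\<eta>\<^sup>2)"
    unfolding N_def D_def \<tau>_def al_def be_def by (simp add: power2_eq_square algebra_simps)
  have "be*\<eta>\<^sup>2 \<ge> -\<eta>"
  proof -
    have "CA*CB > 0" using CA CB by simp
    then have "2*CA*CB + 1 \<noteq> 0" by linarith
    then have "\<eta> * (2*CA*CB + 1) = 1" using eta by simp
    moreover have "\<eta> * \<bar>be\<bar> \<le> \<eta> * (2*CA*CB + 1)" using beb eta0 by (intro mult_left_mono) auto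
    ultimately have "\<eta> * \<bar>be\<bar> \<le> 1" by linarith
    then have "\<eta> * (\<eta> * \<bar>be\<bar>) \<le> \<eta>" using eta0 by (simp add: mult_left_le)
    moreover have "be*\<eta>\<^sup>2 \<ge> - (\<eta> * (\<eta> * \<bar>be\<bar>))"
    proof -
      have "be*\<eta>\<^sup>2 \<ge> (-\<bar>be\<bar>)*\<eta>\<^sup>2" by (rule mult_right_mono) auto
      then show ?thesis by (simp add: power2_eq_square mult_ac)
    qed
    ultimately show ?thesis by linarith
  qed
  then have numb: "N*d - a*D \<ge> al\<^sup>2 * \<eta>" unfolding num
    by (intro mult_left_mono) auto
  have taub: "\<bar>\<tau>\<bar> \<le> \<eta>*(2*CA*CB)" unfolding \<tau>_def using eta0 alb by (simp add: abs_mult)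
  have "D \<le> CB + 2*CB*\<bar>\<tau>\<bar> + CB*\<tau>\<^sup>2"
  proof -
    have "e*\<tau> \<le> \<bar>e\<bar>*\<bar>\<tau>\<bar>" by (metis abs_ge_self abs_mult)
    also have "\<dots> \<le> CB*\<bar>\<tau>\<bar>" using e by (intro mult_right_mono) auto
    finally have "2*e*\<tau> \<le> 2*CB*\<bar>\<tau>\<bar>" by linarith
    moreover have "h*\<tau>\<^sup>2 \<le> CB*\<tau>\<^sup>2" using h by (simp add: mult_right_mono)
    ultimately show ?thesis unfolding D_def using d by linarith
  qed
  also have "\<dots> = CB * (1 + \<bar>\<tau>\<bar>)\<^sup>2" by (simp add: power2_eq_square algebra_simps)
  also have "\<dots> \<le> CB * (1 + \<eta>*(2*CA*CB))\<^sup>2"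
    using taub CB by (intro mult_left_mono power_mono) auto
  finally have Db: "D \<le> CB * (1 + \<eta>*(2*CA*CB))\<^sup>2" .
  have dD: "d*D \<le> CB*CB*(1 + \<eta>*(2*CA*CB))\<^sup>2"
  proof -
    have "d*D \<le> CB*D" using d Dp' by (intro mult_right_mono) auto
    also have "\<dots> \<le> CB*(CB * (1 + \<eta>*(2*CA*CB))\<^sup>2)" using Db CB by (intro mult_left_mono) auto
    finally show ?thesis by (simp add: mult_ac)
  qed
  have dD0: "d*D > 0" using d Dp' by simp
  have "N/D - a/d = (N*d - a*D)/(d*D)" using d Dp' by (simp add: field_simps)
  also have "\<dots> \<ge> al\<^sup>2 * \<eta> / (d*D)" using numb dD0 by (simp add: divide_right_mono)
  finally have s1: "N/D - a/d \<ge> al\<^sup>2 * \<eta> / (d*D)" .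
  have "al\<^sup>2 * \<eta> / (CB*CB*(1 + \<eta>*(2*CA*CB))\<^sup>2) \<le> al\<^sup>2 * \<eta> / (d*D)"
    using dD dD0 eta0 by (intro divide_left_mono) auto
  with s1 have "N/D \<ge> a/d + al\<^sup>2 * \<eta> / (CB*CB*(1 + \<eta>*(2*CA*CB))\<^sup>2)" by linarith
  then show ?thesis unfolding N_def D_def \<tau>_def al_def by (simp add: mult_ac)
qed

definition alpha :: "real^'n^'m \<Rightarrow> real^'n^'l \<Rightarrow> real^'n \<Rightarrow> real^'n \<Rightarrow> real" where
  "alpha A B v x = inner (A *v v) (A *v x) * (norm (B *v v))\<^sup>2 - (norm (A *v v))\<^sup>2 * inner (B *v v) (B *v x)"

lemma mat_bound: "\<exists>K>0. \<forall>y. norm (A *v y) \<le> K * norm y"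
  for A :: "real^'n^'m"
  using bounded_linear.pos_bounded[OF matrix_vector_mul_bounded_linear[of A]]
  by (metis mult.commute)

lemma alpha_par: "alpha A B (s *\<^sub>R x) x = 0"
  unfolding alpha_def by (simp add: matrix_vector_mult_scaleR power_mult_distrib dot_square_norm)

lemma rayq_scale: "c \<noteq> 0 \<Longrightarrow> rayq A B (c *\<^sub>R u) = rayq A B u"
  unfolding rayq_def by (simp add: matrix_vector_mult_scaleR power_mult_distrib)

lemma rayq_bound:
  fixes A :: "real^'n^'m" and B :: "real^'n^'l"
  assumes kerB: "\<forall>u. B *v u = 0 \<longrightarrow> u = 0"
  shows "\<exists>F. \<forall>u. rayq A B u \<le> F"
proof -
  obtain L :: "real^'l^'n" where L: "L ** B = mat 1" using matrix_left_invertible_ker kerB by blast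
  obtain KA where KA: "KA > 0" "\<forall>y. norm (A *v y) \<le> KA * norm y" using mat_bound by blast
  obtain KL where KL: "KL > 0" "\<forall>y. norm (L *v y) \<le> KL * norm y" using mat_bound by blast
  have "rayq A B u \<le> (KA*KL)\<^sup>2" for u
  proof (cases "u = 0")
    case True then show ?thesis by (simp add: rayq_def)
  next
    case False
    have "u = L *v (B *v u)" using L by (simp add: matrix_vector_mul_assoc)
    then have nu: "norm u \<le> KL * norm (B *v u)" using KL by metis
    have Bu: "norm (B *v u) > 0" using kerB False by auto
    have "norm (A *v u) \<le> KA * (KL * norm (B *v u))"
      using KA nu by (meson order_trans mult_left_mono less_imp_le)
    then have "norm (A *v u) / norm (B *v u) \<le> KA*KL" using Bu by (simp add: divide_le_eq mult_ac)
    then have "(norm (A *v u) / norm (B *v u))\<^sup>2 \<le> (KA*KL)\<^sup>2" by (intro power_mono) auto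
    then show ?thesis by (simp add: rayq_def power_divide)
  qed
  then show ?thesis by blast
qed

lemma Det2:
  fixes A :: "real^'n^'m" and B :: "real^'n^'l"
  assumes kerB: "\<forall>u. B *v u = 0 \<longrightarrow> u = 0"
  shows "\<exists>C>0. \<forall>v x t. norm v = 1 \<longrightarrow> norm x = 1 \<longrightarrow> is_line_max A B v x t \<longrightarrow>
            rayq A B v + C * (alpha A B v x)\<^sup>2 \<le> rayq A B (v + t *\<^sub>R x)"
proof -
  obtain KA where KA: "KA > 0" "\<forall>y. norm (A *v y) \<le> KA * norm y" using mat_bound by blast
  obtain KB where KB: "KB > 0" "\<forall>y. norm (B *v y) \<le> KB * norm y" using mat_bound by blast
  define CA where "CA = KA\<^sup>2"
  define CB where "CB = KB\<^sup>2"
  have CA: "CA > 0" and CB: "CB > 0" using KA KB unfolding CA_def CB_def by auto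
  define \<eta> where "\<eta> = 1/(2*CA*CB + 1)"
  have eta0: "\<eta> > 0" unfolding \<eta>_def using CA CB by (simp add: add_pos_pos)
  define C where "C = \<eta> / (CB*CB*(1 + \<eta>*(2*CA*CB))\<^sup>2)"
  have "1 + \<eta>*(2*CA*CB) > 0" using eta0 CA CB by (simp add: add_pos_pos)
  then have C0: "C > 0" unfolding C_def using eta0 CA CB by (intro divide_pos_pos mult_pos_pos) auto
  have main: "rayq A B v + C * (alpha A B v x)\<^sup>2 \<le> rayq A B (v + t *\<^sub>R x)"
    if v: "norm v = 1" and x: "norm x = 1" and lm: "is_line_max A B v x t" for v x t
  proof (cases "alpha A B v x = 0")
    case True
    have "v + 0 *\<^sub>R x \<noteq> 0" using v by auto
    then have "rayq A B (v + 0 *\<^sub>R x) \<le> rayq A B (v + t *\<^sub>R x)" using lm unfolding is_line_max_def by blast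
    then show ?thesis using True by simp
  next
    case False
    define \<tau> where "\<tau> = \<eta> * alpha A B v x"
    have nz: "v + \<tau> *\<^sub>R x \<noteq> 0"
    proof
      assume "v + \<tau> *\<^sub>R x = 0"
      then have "v = (-\<tau>) *\<^sub>R x" by (simp add: eq_neg_iff_add_eq_0)
      then show False using False alpha_par by metis
    qed
    then have le: "rayq A B (v + \<tau> *\<^sub>R x) \<le> rayq A B (v + t *\<^sub>R x)" using lm unfolding is_line_max_def by blast
    have sq: "(norm (M *v y))\<^sup>2 \<le> K\<^sup>2" if "\<forall>y. norm (M *v y) \<le> K * norm y" "norm y = 1" for M :: "real^'n^'k" and K y
    proof -
      have "norm (M *v y) \<le> K" using that by (metis mult.right_neutral)
      then show ?thesis by (intro power_mono) auto
    qed
    have ip: "\<bar>inner (M *v v) (M *v x)\<bar> \<le> K\<^sup>2" if "\<forall>y. norm (M *v y) \<le> K * norm y" for M :: "real^'n^'k" and K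
    proof -
      have "\<bar>inner (M *v v) (M *v x)\<bar> \<le> norm (M *v v) * norm (M *v x)" by (rule Cauchy_Schwarz_ineq2)
      also have "\<dots> \<le> K * K"
      proof -
        have "norm (M *v v) \<le> K" "norm (M *v x) \<le> K" using that v x by (metis mult.right_neutral)+
        then show ?thesis by (intro mult_mono) (auto intro: order_trans[OF norm_ge_zero])
      qed
      finally show ?thesis by (simp add: power2_eq_square)
    qed
    have Bv: "(norm (B *v v))\<^sup>2 > 0" using kerB v by auto
    have Dp: "(norm (B *v (v + \<tau> *\<^sub>R x)))\<^sup>2 > 0" using kerB nz by auto
    note a1 = sq[OF KA(2) v, folded CA_def] and c1 = sq[OF KA(2) x, folded CA_def]
      and d1 = sq[OF KB(2) v, folded CB_def] and h1 = sq[OF KB(2) x, folded CB_def]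
      and b1 = ip[OF KA(2), folded CA_def] and e1 = ip[OF KB(2), folded CB_def]
    have Dp2: "(norm (B *v v))\<^sup>2 + 2*inner (B *v v) (B *v x)*(\<eta>*alpha A B v x) + (norm (B *v x))\<^sup>2*(\<eta>*alpha A B v x)\<^sup>2 > 0"
      using Dp unfolding normexp \<tau>_def .
    have ri: "((norm (A *v v))\<^sup>2 + 2*inner (A *v v) (A *v x)*(\<eta>*alpha A B v x) + (norm (A *v x))\<^sup>2*(\<eta>*alpha A B v x)\<^sup>2) /
              ((norm (B *v v))\<^sup>2 + 2*inner (B *v v) (B *v x)*(\<eta>*alpha A B v x) + (norm (B *v x))\<^sup>2*(\<eta>*alpha A B v x)\<^sup>2)
         \<ge> (norm (A *v v))\<^sup>2/(norm (B *v v))\<^sup>2 + C * (alpha A B v x)\<^sup>2"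
      unfolding alpha_def C_def
      by (rule real_incr[OF Bv d1 _ a1 _ c1 b1 e1 _ h1 CA CB Dp2[unfolded alpha_def] \<eta>_def]) simp_all
    have "rayq A B (v + \<tau> *\<^sub>R x) = ((norm (A *v v))\<^sup>2 + 2*inner (A *v v) (A *v x)*(\<eta>*alpha A B v x) + (norm (A *v x))\<^sup>2*(\<eta>*alpha A B v x)\<^sup>2) /
              ((norm (B *v v))\<^sup>2 + 2*inner (B *v v) (B *v x)*(\<eta>*alpha A B v x) + (norm (B *v x))\<^sup>2*(\<eta>*alpha A B v x)\<^sup>2)"
      unfolding rayq_def normexp \<tau>_def ..
    moreover have "rayq A B v = (norm (A *v v))\<^sup>2/(norm (B *v v))\<^sup>2" by (simp add: rayq_def)
    ultimately show ?thesis using le ri by linarith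
  qed
  show ?thesis using C0 main by blast
qed

lemma null_translate:
  fixes S :: "(real^'n) set" and z :: "real^'n"
  assumes S: "S \<in> sets borel" and Sb: "S \<subseteq> cball 0 r"
    and roots: "\<And>y. finite {t. y + t *\<^sub>R z \<in> S} \<and> card {t. y + t *\<^sub>R z \<in> S} \<le> m"
  shows "emeasure lborel S = 0"
proof -
  define R where "R = cball (0::real^'n) (r + norm z)"
  have Rfin: "emeasure lborel R < \<infinity>" unfolding R_def by (rule emeasure_lborel_cball_finite)
  have R: "R \<in> sets borel" unfolding R_def by simp
  have SR: "S \<subseteq> R"
  proof
    fix x assume "x \<in> S"
    then have "norm x \<le> r" using Sb by (auto simp: dist_norm)
    then have "norm x \<le> r + norm z" using norm_ge_zero[of z] by linarith
    then show "x \<in> R" unfolding R_def by (simp add: dist_norm)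
  qed
  have trans: "emeasure lborel (((+) c) -` S) = emeasure lborel S" for c :: "real^'n"
  proof -
    have "emeasure lborel S = emeasure (distr lborel borel ((+) c)) S" by (simp add: lborel_distr_plus)
    also have "\<dots> = emeasure lborel (((+) c) -` S \<inter> space lborel)"
      by (rule emeasure_distr) (auto simp: S)
    finally show ?thesis by simp
  qed
  have transS: "((+) c) -` S \<in> sets borel" for c :: "real^'n"
    using measurable_sets[OF _ S, of "(+) c" borel] by (auto intro: borel_measurable_continuous_onI continuous_intros)
  have key: "of_nat N * emeasure lborel S \<le> of_nat m * emeasure lborel R" if N: "N > 0" for N :: nat
  proof -
    define c where "c j = (real j / real N) *\<^sub>R z" for j :: nat
    define T where "T j = ((+) (c j)) -` S" for j
    have bnd: "(\<Sum>j<N. indicator (T j) y) \<le> (of_nat m * indicator R y :: ennreal)" for y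
    proof (cases "y \<in> R")
      case False
      have "y \<notin> T j" if "j < N" for j
      proof
        assume "y \<in> T j"
        then have "c j + y \<in> cball 0 r" using Sb unfolding T_def by auto
        moreover have "norm (c j) \<le> norm z"
          using that N unfolding c_def by (simp add: field_simps mult_right_mono)
        moreover have "norm y \<le> norm (c j + y) + norm (c j)"
          using norm_triangle_ineq4[of "c j + y" "c j"] by simp
        moreover have "norm (c j + y) \<le> r" using \<open>c j + y \<in> cball 0 r\<close> by (metis dist_0_norm mem_cball)
        ultimately have "norm y \<le> r + norm z" by linarith
        then show False using False unfolding R_def by (simp add: dist_norm)
      qed
      then show ?thesis by (simp add: False)
    next
      case True
      have "(\<Sum>j<N. indicator (T j) y) = (\<Sum>j<N. indicator {j. y \<in> T j} j :: ennreal)"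
        by (simp add: indicator_def)
      also have "\<dots> = of_nat (card ({..<N} \<inter> {j. y \<in> T j}))"
      proof -
        have "(\<Sum>j<N. indicator {j. y \<in> T j} j :: ennreal) = of_nat (\<Sum>j<N. indicator {j. y \<in> T j} j :: nat)"
          unfolding of_nat_sum by (intro sum.cong) (auto simp: indicator_def)
        then show ?thesis by (simp only: sum_indicator_eq_card[OF finite_lessThan])
      qed
      also have "card ({..<N} \<inter> {j. y \<in> T j}) \<le> card {t. y + t *\<^sub>R z \<in> S}"
      proof -
        have "card ({..<N} \<inter> {j. y \<in> T j}) = card ((\<lambda>j. real j / real N) ` ({..<N} \<inter> {j. y \<in> T j}))"
          using N by (intro card_image[symmetric]) (auto simp: inj_on_def)
        also have "\<dots> \<le> card {t. y + t *\<^sub>R z \<in> S}"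
          using roots[of y] by (intro card_mono) (auto simp: T_def c_def add.commute)
        finally show ?thesis .
      qed
      then have "of_nat (card ({..<N} \<inter> {j. y \<in> T j})) \<le> (of_nat m :: ennreal)"
        using roots[of y] by (simp add: order_trans)
      finally show ?thesis using True by simp
    qed
    have "of_nat N * emeasure lborel S = (\<Sum>j<N. emeasure lborel (T j))"
      unfolding T_def trans by simp
    also have "\<dots> = (\<integral>\<^sup>+ y. (\<Sum>j<N. indicator (T j) y) \<partial>lborel)"
      using transS unfolding T_def by (subst nn_integral_sum) auto
    also have "\<dots> \<le> (\<integral>\<^sup>+ y. of_nat m * indicator R y \<partial>lborel)"
      by (intro nn_integral_mono bnd)
    also have "\<dots> = of_nat m * emeasure lborel R" using R by (simp add: nn_integral_cmult_indicator)
    finally show ?thesis .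
  qed
  have Sfin: "emeasure lborel S \<noteq> \<infinity>"
  proof -
    have "emeasure lborel S \<le> emeasure lborel R" by (rule emeasure_mono[OF SR]) (simp add: R)
    then show ?thesis using Rfin by (auto simp: top_unique)
  qed
  define s where "s = measure lborel S"
  define \<rho> where "\<rho> = measure lborel R"
  have es: "emeasure lborel S = ennreal s" unfolding s_def using Sfin by (simp add: emeasure_eq_ennreal_measure)
  have er: "emeasure lborel R = ennreal \<rho>" unfolding \<rho>_def using Rfin by (simp add: emeasure_eq_ennreal_measure)
  have s0: "s \<ge> 0" "\<rho> \<ge> 0" unfolding s_def \<rho>_def by auto
  have realkey: "real N * s \<le> real m * \<rho>" if "N > 0" for N :: nat
  proof -
    have "ennreal (real N * s) \<le> ennreal (real m * \<rho>)"
      using key[OF that] unfolding es er by (simp add: ennreal_mult' ennreal_of_nat_eq_real_of_nat)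
    then show ?thesis using s0 by (simp add: ennreal_le_iff)
  qed
  have "s = 0"
  proof (rule ccontr)
    assume "s \<noteq> 0"
    then have sp: "s > 0" using s0 by simp
    obtain N :: nat where N: "real N > real m * \<rho> / s" using reals_Archimedean2 by blast
    then have Np: "N > 0" using s0 sp by (metis divide_nonneg_pos gr0I of_nat_0 mult_nonneg_nonneg not_less of_nat_0_le_iff)
    have "real N * s > real m * \<rho>" using N sp by (simp add: divide_less_eq)
    then show False using realkey[OF Np] by simp
  qed
  then show ?thesis using es by simp
qed

lemma ga_hom: "ga A B w (c *\<^sub>R y) = c^3 * ga A B w y"
  unfolding ga_def by (simp add: matrix_vector_mult_scaleR power_mult_distrib power2_eq_square power3_eq_cube algebra_simps)

lemma ga_line_poly:
  fixes A :: "real^'n^'m" and B :: "real^'n^'l"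
  assumes that: "ga A B w z \<noteq> 0"
  shows "\<exists>p. p \<noteq> 0 \<and> degree p \<le> 3 \<and> (\<forall>t. poly p t = ga A B w (y + t *\<^sub>R z))"
proof -
  define a0 where "a0 = (norm (A *v y))\<^sup>2"
  define a1 where "a1 = 2 * inner (A *v y) (A *v z)"
  define a2 where "a2 = (norm (A *v z))\<^sup>2"
  define b0 where "b0 = inner (B *v w) (B *v y)"
  define b1 where "b1 = inner (B *v w) (B *v z)"
  define c0 where "c0 = inner (A *v w) (A *v y)"
  define c1 where "c1 = inner (A *v w) (A *v z)"
  define d0 where "d0 = (norm (B *v y))\<^sup>2"
  define d1 where "d1 = 2 * inner (B *v y) (B *v z)"
  define d2 where "d2 = (norm (B *v z))\<^sup>2"
  define p where "p = [: a0*b0 - c0*d0, a0*b1 + a1*b0 - c0*d1 - c1*d0, a1*b1 + a2*b0 - c1*d1 - c0*d2, a2*b1 - c1*d2 :]"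
  have k3: "a2*b1 - c1*d2 = ga A B w z" unfolding ga_def a2_def b1_def c1_def d2_def ..
  have "coeff p 3 = ga A B w z" unfolding p_def k3[symmetric] by (simp add: numeral_3_eq_3)
  then have p0: "p \<noteq> 0" using that by auto
  have dg: "degree p \<le> 3" unfolding p_def
    using degree_pCons_le[of "a0*b0 - c0*d0" "[:a0*b1 + a1*b0 - c0*d1 - c1*d0, a1*b1 + a2*b0 - c1*d1 - c0*d2, a2*b1 - c1*d2:]"]
      degree_pCons_le[of "a0*b1 + a1*b0 - c0*d1 - c1*d0" "[:a1*b1 + a2*b0 - c1*d1 - c0*d2, a2*b1 - c1*d2:]"]
      degree_pCons_le[of "a1*b1 + a2*b0 - c1*d1 - c0*d2" "[:a2*b1 - c1*d2:]"]
    by simp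
  have ev: "poly p t = ga A B w (y + t *\<^sub>R z)" for t
  proof -
    have i1: "inner (B *v w) (B *v (y + t *\<^sub>R z)) = b0 + b1 * t"
      unfolding b0_def b1_def by (simp add: matrix_vector_right_distrib matrix_vector_mult_scaleR inner_add_right)
    have i2: "inner (A *v w) (A *v (y + t *\<^sub>R z)) = c0 + c1 * t"
      unfolding c0_def c1_def by (simp add: matrix_vector_right_distrib matrix_vector_mult_scaleR inner_add_right)
    have "ga A B w (y + t *\<^sub>R z) = (a0 + a1*t + a2*t\<^sup>2) * (b0 + b1*t) - (c0 + c1*t) * (d0 + d1*t + d2*t\<^sup>2)"
      unfolding ga_def i1 i2 normexp a0_def a1_def a2_def d0_def d1_def d2_def by simp
    then show ?thesis unfolding p_def by (simp add: power2_eq_square algebra_simps)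
  qed
  show ?thesis using p0 dg ev by blast
qed

lemma ga_cont: "continuous_on UNIV (ga A B w)"
  unfolding ga_def by (intro continuous_intros)

lemma ga_null_lborel:
  fixes A :: "real^'n^'m" and B :: "real^'n^'l"
  assumes z: "ga A B w z \<noteq> 0"
  shows "emeasure lborel {y \<in> cball 0 1. ga A B w y = 0} = 0"
proof (rule null_translate[where z=z and m=3 and r=1])
  have "{y \<in> cball 0 1. ga A B w y = 0} = cball 0 1 \<inter> {y. ga A B w y = 0}" by auto
  also have "closed \<dots>" by (intro closed_Int closed_cball closed_Collect_eq continuous_intros ga_cont)
  finally show "{y \<in> cball 0 1. ga A B w y = 0} \<in> sets borel" by (rule borel_closed)
  show "{y \<in> cball 0 1. ga A B w y = 0} \<subseteq> cball 0 1" by auto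
  fix y
  obtain p where p: "p \<noteq> 0" "degree p \<le> 3" "\<forall>t. poly p t = ga A B w (y + t *\<^sub>R z)"
    using ga_line_poly[OF z] by blast
  have sub: "{t. y + t *\<^sub>R z \<in> {y \<in> cball 0 1. ga A B w y = 0}} \<subseteq> {t. poly p t = 0}" using p(3) by auto
  have "finite {t. poly p t = 0}" by (rule poly_roots_finite[OF p(1)])
  moreover have "card {t. poly p t = 0} \<le> 3" using card_poly_roots_bound[OF p(1)] p(2) by linarith
  ultimately show "finite {t. y + t *\<^sub>R z \<in> {y \<in> cball 0 1. ga A B w y = 0}} \<and>
      card {t. y + t *\<^sub>R z \<in> {y \<in> cball 0 1. ga A B w y = 0}} \<le> 3"
    using sub by (meson card_mono finite_subset le_trans)
qed

lemma unif_sphere_null: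
  fixes A :: "real^'n^'m" and B :: "real^'n^'l"
  assumes z: "ga A B w z \<noteq> 0"
  shows "emeasure unif_sphere {x. ga A B w x = 0} = 0"
proof -
  define U where "U = ball (0::real^'n) 1 - {0}"
  have U: "U \<in> sets lborel" unfolding U_def by simp
  have nm: "(\<lambda>x::real^'n. x /\<^sub>R norm x) \<in> borel_measurable borel" by measurable
  have Z: "{x. ga A B w x = 0} \<in> sets borel"
    by (intro borel_closed closed_Collect_eq continuous_intros ga_cont)
  have "emeasure unif_sphere {x. ga A B w x = 0} =
        emeasure (uniform_measure lborel U) ((\<lambda>x. x /\<^sub>R norm x) -` {x. ga A B w x = 0} \<inter> space (uniform_measure lborel U))"
    unfolding unif_sphere_def U_def[symmetric]
    by (rule emeasure_distr) (use nm Z in auto)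
  also have "\<dots> = emeasure lborel (U \<inter> ((\<lambda>x. x /\<^sub>R norm x) -` {x. ga A B w x = 0})) / emeasure lborel U"
    using U measurable_sets[OF nm Z] by (subst emeasure_uniform_measure) auto
  also have "emeasure lborel (U \<inter> ((\<lambda>x. x /\<^sub>R norm x) -` {x. ga A B w x = 0})) = 0"
  proof -
    have "U \<inter> ((\<lambda>x. x /\<^sub>R norm x) -` {x. ga A B w x = 0}) \<subseteq> {y \<in> cball 0 1. ga A B w y = 0}"
    proof safe
      fix y assume y: "y \<in> U" "ga A B w (y /\<^sub>R norm y) = 0"
      then show "y \<in> cball 0 1" unfolding U_def by auto
      have "y \<noteq> 0" using y unfolding U_def by auto
      then show "ga A B w y = 0" using y(2) ga_hom[of A B w "inverse (norm y)" y] by simp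
    qed
    moreover have "U \<inter> ((\<lambda>x. x /\<^sub>R norm x) -` {x. ga A B w x = 0}) \<in> sets lborel"
      using U measurable_sets[OF nm Z] by simp
    moreover have "{y \<in> cball 0 1. ga A B w y = 0} \<in> sets lborel"
    proof -
      have "{y \<in> cball 0 1. ga A B w y = 0} = cball 0 1 \<inter> {y. ga A B w y = 0}" by auto
      also have "closed \<dots>" by (intro closed_Int closed_cball closed_Collect_eq continuous_intros ga_cont)
      finally show ?thesis by simp
    qed
    ultimately have "emeasure lborel (U \<inter> ((\<lambda>x. x /\<^sub>R norm x) -` {x. ga A B w x = 0})) \<le> emeasure lborel {y \<in> cball 0 1. ga A B w y = 0}"
      by (intro emeasure_mono) auto
    then show ?thesis using ga_null_lborel[OF z] by simp
  qed
  finally show ?thesis by simp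
qed

lemma g_nonzero:
  fixes g :: "'w \<Rightarrow> 'a::euclidean_space"
  assumes P: "prob_space M" and D: "distributed M lborel g f"
  shows "AE \<omega> in M. g \<omega> \<noteq> 0"
proof -
  have gm: "g \<in> measurable M lborel" using distributed_measurable[OF D] .
  have fm: "f \<in> borel_measurable lborel" using distributed_borel_measurable[OF D] .
  have ae: "AE x in lborel. x \<in> {0} \<longrightarrow> f x = 0" using AE_lborel_singleton[of 0] by (rule eventually_mono) simp
  have "{0} \<in> null_sets (density lborel f)"
    unfolding null_sets_density_iff[OF fm] by (intro conjI ae) simp
  then have "emeasure (distr M lborel g) {0} = 0" unfolding distributed_distr_eq_density[OF D] by auto
  then have "emeasure M (g -` {0} \<inter> space M) = 0" using gm by (subst (asm) emeasure_distr) auto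
  moreover have "g -` {0} \<inter> space M \<in> sets M" using measurable_sets[OF gm, of "{0}"] by simp
  ultimately show ?thesis by (subst AE_iff_measurable[where N="g -` {0} \<inter> space M"]) auto
qed

lemma nrm_meas: "(\<lambda>x::real^'n. x /\<^sub>R norm x) \<in> borel_measurable borel" by measurable

lemma x_unit:
  fixes x :: "'w \<Rightarrow> real^'n"
  assumes xm: "x \<in> borel_measurable M" and xd: "distr M borel x = unif_sphere"
  shows "AE \<omega> in M. norm (x \<omega>) = 1"
proof -
  define U where "U = ball (0::real^'n) 1 - {0}"
  have U: "U \<in> sets lborel" unfolding U_def by simp
  have Z: "{y::real^'n. norm y \<noteq> 1} \<in> sets borel" by measurable
  have "emeasure M (x -` {y. norm y \<noteq> 1} \<inter> space M) = emeasure (distr M borel x) {y. norm y \<noteq> 1}"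
    by (rule emeasure_distr[symmetric]) (use xm Z in auto)
  also have "\<dots> = emeasure (uniform_measure lborel U) ((\<lambda>x. x /\<^sub>R norm x) -` {y. norm y \<noteq> 1} \<inter> space (uniform_measure lborel U))"
    unfolding xd unif_sphere_def U_def[symmetric]
    by (rule emeasure_distr) (use nrm_meas Z in auto)
  also have "(\<lambda>x. x /\<^sub>R norm x) -` {y. norm y \<noteq> 1} \<inter> space (uniform_measure lborel U) = {0::real^'n}"
  proof safe
    fix y :: "real^'n" assume "norm (y /\<^sub>R norm y) \<noteq> 1" then show "y = 0" by (rule contrapos_np) simp
  qed auto
  also have "emeasure (uniform_measure lborel U) {0} = 0"
    using U by (subst emeasure_uniform_measure) (auto simp: U_def)
  finally have "emeasure M (x -` {y. norm y \<noteq> 1} \<inter> space M) = 0" .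
  moreover have "x -` {y. norm y \<noteq> 1} \<inter> space M \<in> sets M" using measurable_sets[OF xm Z] .
  ultimately show ?thesis by (subst AE_iff_measurable[where N="x -` {y. norm y \<noteq> 1} \<inter> space M"]) auto
qed

definition Iset :: "nat \<Rightarrow> nat option set" where "Iset k = insert None (Some ` {..<k})"

lemma indep_T:
  fixes X :: "nat option \<Rightarrow> 'w \<Rightarrow> 'a::topological_space"
  assumes P: "prob_space M" and ind: "prob_space.indep_vars M (\<lambda>_. borel) X (UNIV :: nat option set)"
    and h: "h \<in> borel_measurable (PiM (Iset k) (\<lambda>_. borel))"
  shows "prob_space.indep_var M (borel :: 'a measure) (\<lambda>\<omega>. h (restrict (\<lambda>i. X i \<omega>) (Iset k)))
            borel (\<lambda>\<omega>. X (Some k) \<omega>)"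
proof -
  interpret prob_space M by (rule P)
  define K where "K = (\<lambda>b. if b then Iset k else {Some k})"
  have "indep_vars (\<lambda>j. PiM (K j) (\<lambda>_. borel)) (\<lambda>j \<omega>. restrict (\<lambda>i. X i \<omega>) (K j)) UNIV"
    by (rule indep_vars_restrict[OF ind]) (auto simp: K_def disjoint_family_on_def Iset_def)
  then have "indep_var (PiM (Iset k) (\<lambda>_. borel)) (\<lambda>\<omega>. restrict (\<lambda>i. X i \<omega>) (Iset k))
                       (PiM {Some k} (\<lambda>_. borel)) (\<lambda>\<omega>. restrict (\<lambda>i. X i \<omega>) {Some k})"
    unfolding indep_var_def
    by (rule indep_vars_cong[THEN iffD1, rotated -1]) (auto simp: K_def split: bool.split)
  from indep_var_compose[OF this h measurable_component_singleton[of "Some k" "{Some k}" "\<lambda>_. borel"]]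
  show ?thesis by (simp add: comp_def)
qed

lemma mv_cont[continuous_intros]: "continuous_on S f \<Longrightarrow> continuous_on S (\<lambda>x. A *v f x)"
  for A :: "real^'n^'m" and f :: "'b::topological_space \<Rightarrow> real^'n"
proof -
  assume c: "continuous_on S f"
  have "continuous_on S ((*v) A \<circ> f)" by (rule continuous_on_compose[OF c matrix_vector_mult_linear_continuous_on])
  then show ?thesis by (simp add: comp_def)
qed

lemma ga_cont2: "continuous_on UNIV (\<lambda>p::((real^'n) \<times> (real^'n)). ga A B (fst p) (snd p))"
  unfolding ga_def by (intro continuous_intros)

lemma Bad_sets: "{p::((real^'n) \<times> (real^'n)). fst p \<noteq> 0 \<and> ga A B (fst p) (snd p) = 0} \<in> sets (borel \<Otimes>\<^sub>M borel)"
proof -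
  have "{p::((real^'n) \<times> (real^'n)). fst p \<noteq> 0 \<and> ga A B (fst p) (snd p) = 0} =
        {p. fst p \<noteq> 0} \<inter> {p. ga A B (fst p) (snd p) = 0}" by auto
  also have "\<dots> \<in> sets borel"
    by (intro sets.Int borel_open borel_closed open_Collect_neq closed_Collect_eq continuous_intros ga_cont2)
  moreover have "sets (borel \<Otimes>\<^sub>M borel) = sets (borel :: ((real^'n) \<times> (real^'n)) measure)"
    by (rule arg_cong[OF borel_prod])
  ultimately show ?thesis by simp
qed

lemma null_step:
  fixes A :: "real^'n^'m" and B :: "real^'n^'l" and X :: "nat option \<Rightarrow> 'w \<Rightarrow> real^'n"
  assumes P: "prob_space M" and ind: "prob_space.indep_vars M (\<lambda>_. borel) X (UNIV :: nat option set)"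
    and h: "h \<in> borel_measurable (PiM (Iset k) (\<lambda>_. borel))"
    and kerB: "\<forall>u. B *v u = 0 \<longrightarrow> u = 0"
    and dimG: "dim (gen_eigenspace A B (lambda_max A B)) < CARD('n) - 1"
    and xd: "distr M borel (X (Some k)) = unif_sphere"
  shows "AE \<omega> in M. h (restrict (\<lambda>i. X i \<omega>) (Iset k)) \<noteq> 0 \<longrightarrow>
            ga A B (h (restrict (\<lambda>i. X i \<omega>) (Iset k))) (X (Some k) \<omega>) \<noteq> 0"
proof -
  interpret prob_space M by (rule P)
  define W where "W \<omega> = h (restrict (\<lambda>i. X i \<omega>) (Iset k))" for \<omega>
  define Y where "Y = X (Some k)"
  define Bad where "Bad = {p::((real^'n) \<times> (real^'n)). fst p \<noteq> 0 \<and> ga A B (fst p) (snd p) = 0}"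
  have Bad: "Bad \<in> sets (borel \<Otimes>\<^sub>M borel)" unfolding Bad_def by (rule Bad_sets)
  have iv: "indep_var borel W borel Y" unfolding W_def Y_def by (rule indep_T[OF P ind h])
  then have Wm: "W \<in> borel_measurable M" and Ym: "Y \<in> borel_measurable M"
    and joint: "distr M borel W \<Otimes>\<^sub>M distr M borel Y = distr M (borel \<Otimes>\<^sub>M borel) (\<lambda>x. (W x, Y x))"
    unfolding indep_var_distribution_eq by auto
  have xd': "distr M borel Y = unif_sphere" using xd unfolding Y_def .
  have pm: "(\<lambda>x. (W x, Y x)) \<in> measurable M (borel \<Otimes>\<^sub>M borel)" using Wm Ym by measurable
  have us: "sigma_finite_measure (unif_sphere :: (real^'n) measure)"
  proof -
    have "prob_space (unif_sphere :: (real^'n) measure)" unfolding xd[symmetric] by (rule prob_space_distr) (use Ym Y_def in simp)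
    then show ?thesis by (rule prob_space_imp_sigma_finite)
  qed
  have slice: "emeasure unif_sphere (Pair w -` Bad) = 0" for w
  proof (cases "w = 0")
    case True
    then have "Pair w -` Bad = {}" unfolding Bad_def by auto
    then show ?thesis by simp
  next
    case False
    then obtain z where z: "ga A B w z \<noteq> 0" using ga_nonzero[OF kerB dimG] by blast
    have "Pair w -` Bad = {x. ga A B w x = 0}" unfolding Bad_def using False by auto
    then show ?thesis using unif_sphere_null[OF z] by simp
  qed
  have "emeasure M ((\<lambda>x. (W x, Y x)) -` Bad \<inter> space M) = emeasure (distr M (borel \<Otimes>\<^sub>M borel) (\<lambda>x. (W x, Y x))) Bad"
    by (rule emeasure_distr[symmetric]) (use pm Bad in auto)
  also have "\<dots> = emeasure (distr M borel W \<Otimes>\<^sub>M unif_sphere) Bad" unfolding joint[symmetric] xd' ..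
  also have "\<dots> = (\<integral>\<^sup>+w. emeasure unif_sphere (Pair w -` Bad) \<partial>distr M borel W)"
  proof (rule sigma_finite_measure.emeasure_pair_measure_alt[OF us])
    have "sets (distr M borel W \<Otimes>\<^sub>M (unif_sphere :: (real^'n) measure)) = sets (borel \<Otimes>\<^sub>M (borel :: (real^'n) measure))"
      by (rule sets_pair_measure_cong) (auto simp: unif_sphere_def)
    then show "Bad \<in> sets (distr M borel W \<Otimes>\<^sub>M unif_sphere)" using Bad by simp
  qed
  also have "\<dots> = 0" by (simp add: slice)
  finally have N0: "emeasure M ((\<lambda>x. (W x, Y x)) -` Bad \<inter> space M) = 0" .
  have Ns: "(\<lambda>x. (W x, Y x)) -` Bad \<inter> space M \<in> sets M" using measurable_sets[OF pm Bad] .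
  have "AE \<omega> in M. \<not> ((W \<omega>, Y \<omega>) \<in> Bad)"
    by (subst AE_iff_measurable[OF Ns]) (auto simp: N0)
  then show ?thesis unfolding W_def Y_def Bad_def by (auto elim!: eventually_mono)
qed

lemma mv_meas[measurable (raw)]: "f \<in> borel_measurable N \<Longrightarrow> (\<lambda>\<omega>. A *v f \<omega>) \<in> borel_measurable N"
  for A :: "real^'n^'m" and f :: "'w \<Rightarrow> real^'n"
  by (rule measurable_compose[OF _ borel_measurable_continuous_onI[OF matrix_vector_mult_linear_continuous_on]])

definition Phi :: "real^'n^'m \<Rightarrow> real^'n^'l \<Rightarrow> real^'n \<Rightarrow> real^'n \<Rightarrow> real^'n" where
  "Phi A B w y = (w + tsel A B w y *\<^sub>R y) /\<^sub>R norm (w + tsel A B w y *\<^sub>R y)"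

lemma Phi_meas:
  fixes A :: "real^'n^'m" and B :: "real^'n^'l"
  assumes [measurable]: "F \<in> borel_measurable N" "G \<in> borel_measurable N"
  shows "(\<lambda>\<omega>. Phi A B (F \<omega>) (G \<omega>)) \<in> borel_measurable N"
  unfolding Phi_def tsel_def tx_def Mx_def by measurable

lemma final_det:
  fixes A :: "real^'n^'m" and B :: "real^'n^'l"
  assumes kerB: "\<forall>u. B *v u = 0 \<longrightarrow> u = 0"
    and vu: "\<And>k. norm (v k) = 1" and xu: "\<And>k. norm (x k) = 1"
    and lm: "\<And>k. is_line_max A B (v k) (x k) (tau k)"
    and st: "\<And>k. v (Suc k) = (v k + tau k *\<^sub>R x k) /\<^sub>R norm (v k + tau k *\<^sub>R x k)"
  shows "(\<lambda>k. alpha A B (v k) (x k)) \<longlonglongrightarrow> 0"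
proof -
  obtain C where C: "C > 0" and CC: "\<forall>v x t. norm v = 1 \<longrightarrow> norm x = 1 \<longrightarrow> is_line_max A B v x t \<longrightarrow>
            rayq A B v + C * (alpha A B v x)\<^sup>2 \<le> rayq A B (v + t *\<^sub>R x)"
    using Det2[OF kerB, of A] by blast
  obtain F where F: "\<forall>u. rayq A B u \<le> F" using rayq_bound[OF kerB, of A] by blast
  have step: "rayq A B (v k) + C * (alpha A B (v k) (x k))\<^sup>2 \<le> rayq A B (v (Suc k))" for k
  proof -
    have nz: "v k + tau k *\<^sub>R x k \<noteq> 0" using lm[of k] unfolding is_line_max_def by blast
    have "rayq A B (v (Suc k)) = rayq A B (v k + tau k *\<^sub>R x k)"
      unfolding st using nz by (simp add: rayq_scale)
    then show ?thesis using CC vu xu lm by metis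
  qed
  have sumb: "(\<Sum>k<n. C * (alpha A B (v k) (x k))\<^sup>2) \<le> rayq A B (v n) - rayq A B (v 0)" for n
  proof (induction n)
    case 0 then show ?case by simp
  next
    case (Suc n) then show ?case using step[of n] by simp
  qed
  have summ: "summable (\<lambda>k. C * (alpha A B (v k) (x k))\<^sup>2)"
  proof (rule summableI_nonneg_bounded)
    show "0 \<le> C * (alpha A B (v k) (x k))\<^sup>2" for k using C by simp
    show "(\<Sum>k<n. C * (alpha A B (v k) (x k))\<^sup>2) \<le> F - rayq A B (v 0)" for n
      using sumb[of n] F by (smt (verit))
  qed
  have "(\<lambda>k. C * (alpha A B (v k) (x k))\<^sup>2) \<longlonglongrightarrow> 0" by (rule summable_LIMSEQ_zero[OF summ])
  then have "(\<lambda>k. (1/C) * (C * (alpha A B (v k) (x k))\<^sup>2)) \<longlonglongrightarrow> (1/C) * 0" by (intro tendsto_mult) auto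
  then have "(\<lambda>k. (alpha A B (v k) (x k))\<^sup>2) \<longlonglongrightarrow> 0" using C by simp
  then have "(\<lambda>k. sqrt ((alpha A B (v k) (x k))\<^sup>2)) \<longlonglongrightarrow> sqrt 0" by (rule tendsto_real_sqrt)
  then have "(\<lambda>k. \<bar>alpha A B (v k) (x k)\<bar>) \<longlonglongrightarrow> 0" by simp
  then show ?thesis by (simp add: tendsto_rabs_zero_iff)
qed

theorem mainTheorem2:
  fixes A :: "real^'n^'m" and B :: "real^'n^'l"
    and M :: "'w measure"
    and g :: "'w \<Rightarrow> real^'n"
    and x :: "nat \<Rightarrow> 'w \<Rightarrow> real^'n"
    and v :: "nat \<Rightarrow> 'w \<Rightarrow> real^'n"
    and tau :: "nat \<Rightarrow> 'w \<Rightarrow> real"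
  assumes dim_ge: "CARD('n) \<ge> 2"
    and kerB: "\<forall>u. B *v u = 0 \<longrightarrow> u = 0"
    and dimG: "dim (gen_eigenspace A B (lambda_max A B)) < CARD('n) - 1"
    and P: "prob_space M"
    and g_gauss: "distributed M lborel g
        (\<lambda>z. ennreal ((2 * pi) powr (- real CARD('n) / 2) * exp (- (norm z)\<^sup>2 / 2)))"
    and x_rv: "\<And>k. x k \<in> borel_measurable M"
    and x_unif: "\<And>k. distr M borel (x k) = unif_sphere"
    and indep: "prob_space.indep_vars M (\<lambda>_. borel)
        (\<lambda>i. case i of None \<Rightarrow> g | Some k \<Rightarrow> x k) (UNIV :: nat option set)"
    and tau_meas: "\<And>k. tau k \<in> borel_measurable M"
    and v0: "AE \<omega> in M. v 0 \<omega> = g \<omega> /\<^sub>R norm (g \<omega>)"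
    and tau_def: "AE \<omega> in M. \<forall>k. if (\<exists>t. is_line_max A B (v k \<omega>) (x k \<omega>) t)
                          then is_line_max A B (v k \<omega>) (x k \<omega>) (tau k \<omega>)
                          else tau k \<omega> = 0"
    and v_step: "AE \<omega> in M. \<forall>k. v (Suc k) \<omega> =
        (v k \<omega> + tau k \<omega> *\<^sub>R x k \<omega>) /\<^sub>R norm (v k \<omega> + tau k \<omega> *\<^sub>R x k \<omega>)"
  shows "AE \<omega> in M.
    (\<lambda>k. inner (A *v v k \<omega>) (A *v x k \<omega>) * (norm (B *v v k \<omega>))\<^sup>2
         - (norm (A *v v k \<omega>))\<^sup>2 * inner (B *v v k \<omega>) (B *v x k \<omega>)) \<longlonglongrightarrow> 0"
proof -
  interpret prob_space M by (rule P)
  define Xf where "Xf = (\<lambda>i. case i of None \<Rightarrow> g | Some k \<Rightarrow> x k)"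
  have ind: "indep_vars (\<lambda>_. borel) Xf (UNIV :: nat option set)" using indep unfolding Xf_def .
  define T where "T k \<omega> = restrict (\<lambda>i. Xf i \<omega>) (Iset k)" for k \<omega>
  have XfS: "Xf (Some k) = x k" for k unfolding Xf_def by simp
  have g0: "AE \<omega> in M. g \<omega> \<noteq> 0" by (rule g_nonzero[OF P g_gauss])
  have xu: "AE \<omega> in M. \<forall>k. norm (x k \<omega>) = 1"
    by (subst AE_all_countable) (intro allI x_unit[OF x_rv x_unif])
  have vu: "AE \<omega> in M. \<forall>k. norm (v k \<omega>) = 1"
    using g0 v0 tau_def v_step
  proof eventually_elim
    case (elim \<omega>)
    show ?case
    proof
      fix k show "norm (v k \<omega>) = 1"
      proof (induction k)
        case 0 then show ?case using elim by simp
      next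
        case (Suc k)
        have "v k \<omega> + tau k \<omega> *\<^sub>R x k \<omega> \<noteq> 0"
        proof (cases "\<exists>t. is_line_max A B (v k \<omega>) (x k \<omega>) t")
          case True then show ?thesis using elim(3) unfolding is_line_max_def by metis
        next
          case False then have "tau k \<omega> = 0" using elim(3) by metis
          then show ?thesis using Suc by auto
        qed
        then show ?case using elim(4) by simp
      qed
    qed
  qed
  have rep: "\<exists>h. h \<in> borel_measurable (PiM (Iset k) (\<lambda>_. borel)) \<and> (AE \<omega> in M. v k \<omega> = h (T k \<omega>))" for k
  proof (induction k)
    case 0
    define h0 where "h0 f = f None /\<^sub>R norm (f None)" for f :: "nat option \<Rightarrow> real^'n"
    have N0: "None \<in> Iset 0" by (simp add: Iset_def)
    have "h0 \<in> borel_measurable (PiM (Iset 0) (\<lambda>_. borel))"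
      unfolding h0_def using measurable_compose[OF measurable_component_singleton[OF N0, of "\<lambda>_. borel"] nrm_meas] by simp
    moreover have "AE \<omega> in M. v 0 \<omega> = h0 (T 0 \<omega>)"
      using v0 by (rule eventually_mono) (simp add: h0_def T_def Iset_def Xf_def)
    ultimately show ?case by blast
  next
    case (Suc k)
    then obtain h where hm: "h \<in> borel_measurable (PiM (Iset k) (\<lambda>_. borel))"
      and hv: "AE \<omega> in M. v k \<omega> = h (T k \<omega>)" by blast
    have nul: "AE \<omega> in M. h (T k \<omega>) \<noteq> 0 \<longrightarrow> ga A B (h (T k \<omega>)) (x k \<omega>) \<noteq> 0"
      using null_step[OF P ind hm kerB dimG, unfolded XfS, OF x_unif] unfolding T_def .
    define h' where "h' f = Phi A B (h (restrict f (Iset k))) (f (Some k))" for f :: "nat option \<Rightarrow> real^'n"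
    have sub: "Iset k \<subseteq> Iset (Suc k)" unfolding Iset_def by auto
    have "h' \<in> borel_measurable (PiM (Iset (Suc k)) (\<lambda>_. borel))"
      unfolding h'_def
      by (intro Phi_meas measurable_compose[OF measurable_restrict_subset[OF sub] hm]
                measurable_component_singleton) (simp add: Iset_def)
    moreover have "AE \<omega> in M. v (Suc k) \<omega> = h' (T (Suc k) \<omega>)"
      using hv nul vu tau_def v_step
    proof eventually_elim
      case (elim \<omega>)
      have vk: "v k \<omega> \<noteq> 0" using elim(3) by (metis norm_zero zero_neq_one)
      have gnz: "ga A B (v k \<omega>) (x k \<omega>) \<noteq> 0" using elim(1,2) vk by simp
      have ex: "\<exists>t. is_line_max A B (v k \<omega>) (x k \<omega>) t" using Det1(1)[OF kerB gnz] by blast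
      then have "is_line_max A B (v k \<omega>) (x k \<omega>) (tau k \<omega>)" using elim(4) by metis
      then have tk: "tau k \<omega> = tsel A B (v k \<omega>) (x k \<omega>)" by (rule Det1(2)[OF kerB gnz])
      have "v (Suc k) \<omega> = Phi A B (v k \<omega>) (x k \<omega>)" unfolding Phi_def tk[symmetric] using elim(5) by simp
      moreover have "restrict (T (Suc k) \<omega>) (Iset k) = T k \<omega>"
      proof -
        have "Iset (Suc k) \<inter> Iset k = Iset k" using sub by blast
        then show ?thesis unfolding T_def by simp
      qed
      moreover have "T (Suc k) \<omega> (Some k) = x k \<omega>" unfolding T_def by (simp add: Iset_def XfS)
      ultimately show ?case unfolding h'_def using elim(1) by simp
    qed
    ultimately show ?case by blast
  qed
  have gaAE: "AE \<omega> in M. \<forall>k. ga A B (v k \<omega>) (x k \<omega>) \<noteq> 0"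
  proof (subst AE_all_countable, intro allI)
    fix k
    obtain h where hm: "h \<in> borel_measurable (PiM (Iset k) (\<lambda>_. borel))"
      and hv: "AE \<omega> in M. v k \<omega> = h (T k \<omega>)" using rep by blast
    have nul: "AE \<omega> in M. h (T k \<omega>) \<noteq> 0 \<longrightarrow> ga A B (h (T k \<omega>)) (x k \<omega>) \<noteq> 0"
      using null_step[OF P ind hm kerB dimG, unfolded XfS, OF x_unif] unfolding T_def .
    show "AE \<omega> in M. ga A B (v k \<omega>) (x k \<omega>) \<noteq> 0"
      using hv nul vu
    proof eventually_elim
      case (elim \<omega>)
      have "v k \<omega> \<noteq> 0" using elim(3) by (metis norm_zero zero_neq_one)
      then show ?case using elim(1,2) by simp
    qed
  qed
  show ?thesis
    using gaAE vu xu tau_def v_step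
  proof eventually_elim
    case (elim \<omega>)
    have lm: "is_line_max A B (v k \<omega>) (x k \<omega>) (tau k \<omega>)" for k
    proof -
      have "\<exists>t. is_line_max A B (v k \<omega>) (x k \<omega>) t" using Det1(1)[OF kerB, of A "v k \<omega>" "x k \<omega>"] elim(1) by blast
      then show ?thesis using elim(4) by metis
    qed
    have "(\<lambda>k. alpha A B (v k \<omega>) (x k \<omega>)) \<longlonglongrightarrow> 0"
      by (rule final_det[OF kerB]) (use elim lm in auto)
    then show ?case unfolding alpha_def .
  qed
qed

end
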